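(* Let $\mathfrak g$ be a Lie algebra and $r_1,r_2\in\wedge^2\mathfrak g$ skew-symmetric $r$-matrices. Let $\phi:\mathfrak g\to\mathfrak g$ be a Lie algebra homomorphism and $\varphi:\mathfrak g\to\mathfrak g$ a linear map. Then $(\phi,\varphi)$ is a weak homomorphism (resp. weak isomorphism) from $r_2$ to $r_1$ if and only if $(\phi,\varphi^* )$ is a homomorphism (resp. isomorphism) from $r_2^\sharp$ to $r_1^\sharp$ as $\mathcal O$-operators on $\mathfrak g$ with respect to the coadjoint representation.
   Context: A skew-symmetric $r$-matrix is $r\in\wedge^2\mathfrak g$ with $[r,r]=0$ (Gerstenhaber bracket); $r^\sharp:\mathfrak g^*\to\mathfrak g$, $\langle r^\sharp\xi,\eta\rangle=\langle r,\xi\otimes\eta\rangle$, is then an $\mathcal O$-operator with respect to the coadjoint representation $\mathrm{ad}^*$, $\langle\mathrm{ad}^*_x\xi,y\rangle=-\langle\xi,[x,y]\rangle$. A weak homomorphism from $r_2$ to $r_1$ is a pair of a Lie algebra homomorphism $\phi:\mathfrak g\to\mathfrak g$ and a linear map $\varphi:\mathfrak g\to\mathfrak g$ with $(\varphi\otimes\mathrm{Id}_{\mathfrak g})(r_1)=(\mathrm{Id}_{\mathfrak g}\otimes\phi)(r_2)$ and $\varphi[\phi(x),y]=[x,\varphi(y)]$ for all $x,y\in\mathfrak g$; a weak isomorphism if moreover $\phi,\varphi$ are linear isomorphisms. For $\mathcal O$-operators $T,T':V\to\mathfrak g$ with respect to a representation $(V;\rho)$, a homomorphism from $T'$ to $T$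 is a pair of a Lie algebra homomorphism $\phi_{\mathfrak g}:\mathfrak g\to\mathfrak g$ and a linear $\phi_V:V\to V$ with $T\circ\phi_V=\phi_{\mathfrak g}\circ T'$ and $\phi_V\rho(x)(u)=\rho(\phi_{\mathfrak g}(x))(\phi_V(u))$; an isomorphism if both are invertible. Here $V=\mathfrak g^*$, $\rho=\mathrm{ad}^*$, and $\varphi^*:\mathfrak g^*\to\mathfrak g^*$ is the dual map. *)

theory Defs
  imports "HOL-Analysis.Analysis"
begin

text \<open>The finite-dimensional Lie algebra g over a field 'k is modelled as the
coordinate space 'k^'n (standard basis axis i 1) with a bracket br. The dual space g* is
modelled as 'k^'n as well, via the nondegenerate pairing pair xi x = sum_i xi_i x_i.
Elements of g (x) g are matrices r :: 'k^'n^'n, r = sum_{i,j} r_ij e_i (x) e_j.\<close>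

abbreviation klinear :: "('k::field^'n \<Rightarrow> 'k^'m) \<Rightarrow> bool" where
  "klinear f \<equiv> Vector_Spaces.linear ((*s)) ((*s)) f"

definition pair :: "'k::field^'n \<Rightarrow> 'k^'n \<Rightarrow> 'k" where
  "pair xi x = (\<Sum>i\<in>UNIV. xi $ i * x $ i)"

definition lie_algebra :: "('k::field^'n \<Rightarrow> 'k^'n \<Rightarrow> 'k^'n) \<Rightarrow> bool" where
  "lie_algebra br \<longleftrightarrow>
     (\<forall>x. klinear (br x)) \<and> (\<forall>y. klinear (\<lambda>x. br x y)) \<and>
     (\<forall>x. br x x = 0) \<and>
     (\<forall>x y z. br x (br y z) + br y (br z x) + br z (br x y) = 0)"

definition lie_hom :: "('k::field^'n \<Rightarrow> 'k^'n \<Rightarrow> 'k^'n) \<Rightarrow> ('k^'n \<Rightarrow> 'k^'n) \<Rightarrow> bool" where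
  "lie_hom br f \<longleftrightarrow> klinear f \<and> (\<forall>x y. f (br x y) = br (f x) (f y))"

definition tev :: "'k::field^'n^'n \<Rightarrow> 'k^'n \<Rightarrow> 'k^'n \<Rightarrow> 'k" where
  "tev r xi eta = (\<Sum>i\<in>UNIV. \<Sum>j\<in>UNIV. r $ i $ j * xi $ i * eta $ j)"

definition skew2 :: "'k::field^'n^'n \<Rightarrow> bool" where
  "skew2 r \<longleftrightarrow> (\<forall>i j. r $ i $ j = - r $ j $ i) \<and> (\<forall>i. r $ i $ i = 0)"

text \<open>[r,r] evaluated on xi (x) eta (x) zeta, in the classical Yang-Baxter form
[r12,r13] + [r12,r23] + [r13,r23] (for skew-symmetric r this is, up to a nonzero
normalising constant, the Gerstenhaber/Schouten bracket [r,r]).\<close>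
definition rr_eval :: "('k::field^'n \<Rightarrow> 'k^'n \<Rightarrow> 'k^'n) \<Rightarrow> 'k^'n^'n \<Rightarrow> 'k^'n \<Rightarrow> 'k^'n \<Rightarrow> 'k^'n \<Rightarrow> 'k" where
  "rr_eval br r xi eta zeta =
     (\<Sum>i\<in>UNIV. \<Sum>j\<in>UNIV. \<Sum>k\<in>UNIV. \<Sum>l\<in>UNIV. r $ i $ j * r $ k $ l *
        ( pair xi (br (axis i 1) (axis k 1)) * eta $ j * zeta $ l
        + xi $ i * pair eta (br (axis j 1) (axis k 1)) * zeta $ l
        + xi $ i * eta $ k * pair zeta (br (axis j 1) (axis l 1))))"

definition skew_r_matrix :: "('k::field^'n \<Rightarrow> 'k^'n \<Rightarrow> 'k^'n) \<Rightarrow> 'k^'n^'n \<Rightarrow> bool" where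
  "skew_r_matrix br r \<longleftrightarrow> skew2 r \<and> (\<forall>xi eta zeta. rr_eval br r xi eta zeta = 0)"

text \<open>r^sharp : g* -> g, characterised by pair eta (sharp r xi) = tev r xi eta.\<close>
definition sharp :: "'k::field^'n^'n \<Rightarrow> 'k^'n \<Rightarrow> 'k^'n" where
  "sharp r xi = (\<chi> j. \<Sum>i\<in>UNIV. r $ i $ j * xi $ i)"

definition coad :: "('k::field^'n \<Rightarrow> 'k^'n \<Rightarrow> 'k^'n) \<Rightarrow> 'k^'n \<Rightarrow> 'k^'n \<Rightarrow> 'k^'n" where
  "coad br x xi = (\<chi> i. - pair xi (br x (axis i 1)))"

definition dual_map :: "('k::field^'n \<Rightarrow> 'k^'n) \<Rightarrow> 'k^'n \<Rightarrow> 'k^'n" where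
  "dual_map f xi = (\<chi> i. pair xi (f (axis i 1)))"

definition tmap :: "('k::field^'n \<Rightarrow> 'k^'n) \<Rightarrow> ('k^'n \<Rightarrow> 'k^'n) \<Rightarrow> 'k^'n^'n \<Rightarrow> 'k^'n^'n" where
  "tmap A B r = (\<chi> i j. \<Sum>k\<in>UNIV. \<Sum>l\<in>UNIV. r $ k $ l * A (axis k 1) $ i * B (axis l 1) $ j)"

definition weak_hom where
  "weak_hom br r2 r1 phi vphi \<longleftrightarrow>
     lie_hom br phi \<and> klinear vphi \<and>
     tmap vphi id r1 = tmap id phi r2 \<and>
     (\<forall>x y. vphi (br (phi x) y) = br x (vphi y))"

definition weak_iso where
  "weak_iso br r2 r1 phi vphi \<longleftrightarrow> weak_hom br r2 r1 phi vphi \<and> bij phi \<and> bij vphi"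

definition O_hom where
  "O_hom br rho T' T phig phiV \<longleftrightarrow>
     lie_hom br phig \<and> klinear phiV \<and>
     T \<circ> phiV = phig \<circ> T' \<and>
     (\<forall>x u. phiV (rho x u) = rho (phig x) (phiV u))"

definition O_iso where
  "O_iso br rho T' T phig phiV \<longleftrightarrow> O_hom br rho T' T phig phiV \<and> bij phig \<and> bij phiV"

end

theory Submission
  imports Defs
begin

lemma ax_sum_l[simp]: "(\<Sum>l\<in>UNIV. (axis l (1::'k::field) :: 'k^'n) $ j * f l) = f j"
proof -
  have "(\<Sum>l\<in>UNIV. (axis l (1::'k::field) :: 'k^'n) $ j * f l) = (\<Sum>l\<in>UNIV. if l = j then f l else 0)"
    by (rule sum.cong) (auto simp: axis_def)
  then show ?thesis by simp
qed

lemma axis_sum_l: "(\<Sum>l\<in>UNIV. f l * (axis l (1::'k::field) :: 'k^'n) $ j) = f j"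
  using ax_sum_l[of j f] by (simp add: mult.commute)

lemma pair_axis: "pair (axis i 1) (a :: 'k::field^'n) = a $ i"
proof -
  have "pair (axis i 1) a = (\<Sum>l\<in>UNIV. if l = i then a $ l else 0)"
    unfolding pair_def by (rule sum.cong) (auto simp: axis_def)
  then show ?thesis by simp
qed

lemma pair_axis2: "pair (a :: 'k::field^'n) (axis i 1) = a $ i"
  using pair_axis[of i a] by (simp add: pair_def mult.commute)

lemma dual_map_mat: "dual_map f xi = transpose (matrix f) *v xi"
  by (simp add: dual_map_def pair_def vec_eq_iff matrix_vector_mult_def transpose_def matrix_def mult.commute)

lemma sharp_mat: "sharp r xi = transpose r *v xi"
  by (simp add: sharp_def vec_eq_iff matrix_vector_mult_def transpose_def)

lemma tmap1: "tmap A id r = matrix A ** r"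
  by (simp add: tmap_def vec_eq_iff matrix_matrix_mult_def matrix_def axis_sum_l mult.commute)

lemma tmap2: "tmap id B (r :: 'k::field^'n^'n) = r ** transpose (matrix B)"
proof -
  have "\<And>i j. (\<Sum>k\<in>UNIV. \<Sum>l\<in>UNIV. r $ k $ l * (axis k 1 :: 'k^'n) $ i * B (axis l 1) $ j)
        = (\<Sum>l\<in>UNIV. r $ i $ l * B (axis l 1) $ j)"
  proof -
    fix i j
    have "(\<Sum>k\<in>UNIV. \<Sum>l\<in>UNIV. r $ k $ l * (axis k 1 :: 'k^'n) $ i * B (axis l 1) $ j)
      = (\<Sum>k\<in>UNIV. (axis k 1 :: 'k^'n) $ i * (\<Sum>l\<in>UNIV. r $ k $ l * B (axis l 1) $ j))"
      by (simp add: sum_distrib_left mult.commute mult.left_commute)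
    also have "\<dots> = (\<Sum>l\<in>UNIV. r $ i $ l * B (axis l 1) $ j)" by (rule ax_sum_l)
    finally show "?thesis i j" .
  qed
  then show ?thesis
    by (simp add: tmap_def vec_eq_iff matrix_matrix_mult_def matrix_def transpose_def)
qed


lemma pair_dual:
  assumes "klinear f"
  shows "pair (dual_map f xi) x = pair xi (f x)"
proof -
  have "pair (dual_map f xi) x = (\<Sum>i\<in>UNIV. \<Sum>m\<in>UNIV. xi $ m * f (axis i 1) $ m * x $ i)"
    by (simp add: dual_map_def pair_def sum_distrib_right)
  also have "\<dots> = (\<Sum>m\<in>UNIV. \<Sum>i\<in>UNIV. xi $ m * (x $ i * f (axis i 1) $ m))"
    by (subst sum.swap) (simp add: mult.commute mult.left_commute)
  also have "\<dots> = pair xi (f x)"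
    by (simp add: pair_def linear_componentwise[OF assms, of x] sum_distrib_left)
  finally show ?thesis .
qed

lemma dual_lin: "klinear (dual_map f)"
  unfolding dual_map_mat[abs_def] by simp

lemma dual_dual: "klinear f \<Longrightarrow> dual_map (dual_map f) = f"
proof (rule ext)
  fix x
  assume lf: "klinear f"
  have a: "dual_map f (axis i 1) $ m = f (axis m 1) $ i" for i m
    by (simp add: dual_map_def pair_axis)
  have "dual_map (dual_map f) x $ i = f x $ i" for i
  proof -
    have "dual_map (dual_map f) x $ i = pair x (dual_map f (axis i 1))"
      by (simp add: dual_map_def)
    also have "\<dots> = (\<Sum>m\<in>UNIV. x $ m * f (axis m 1) $ i)"
      unfolding pair_def a ..
    also have "\<dots> = f x $ i" by (simp add: linear_componentwise[OF lf, of x])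
    finally show ?thesis .
  qed
  then show "dual_map (dual_map f) x = f x" by (simp add: vec_eq_iff)
qed

lemma dual_id: "dual_map id xi = xi"
  by (simp add: vec_eq_iff dual_map_def pair_axis2)

lemma dual_comp:
  assumes "klinear f" "klinear g"
  shows "dual_map g (dual_map f xi) = dual_map (f \<circ> g) xi"
  by (simp add: vec_eq_iff dual_map_def[of g] dual_map_def[of "f \<circ> g"] pair_dual[OF assms(1)])

lemma bij_dual:
  assumes "klinear f" "bij f"
  shows "bij (dual_map f)"
proof -
  obtain g where g: "klinear g" "g \<circ> f = id"
    using vec.linear_injective_left_inverse[OF assms(1)] assms(2) bij_is_inj by blast
  have fg: "f \<circ> g = id"
    using g(2) assms(2) by (metis bij_is_surj surj_iff o_assoc comp_id id_comp)
  have "dual_map g \<circ> dual_map f = id"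
    by (rule ext) (simp add: dual_comp[OF assms(1) g(1)] fg dual_id)
  moreover have "dual_map f \<circ> dual_map g = id"
    by (rule ext) (simp add: dual_comp[OF g(1) assms(1)] g(2) dual_id)
  ultimately show ?thesis using o_bij by blast
qed

lemma bij_dual_iff: "klinear f \<Longrightarrow> bij (dual_map f) \<longleftrightarrow> bij f"
  using bij_dual[of f] bij_dual[OF dual_lin, of f] dual_dual[of f] by auto


lemma mv_eq: "((*v) (A::'k::field^'n^'m) = (*v) B) \<longleftrightarrow> A = B"
  by (metis matrix_eq)

lemma lin_eq_axes:
  assumes "klinear (f::'k::field^'n \<Rightarrow> 'k^'m)" "klinear g" "\<And>i. f (axis i 1) = g (axis i 1)"
  shows "f y = g y"
  by (simp add: vec_eq_iff linear_componentwise[OF assms(1), of y] linear_componentwise[OF assms(2), of y] assms(3))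

lemma coad_dual: "coad br x u = - dual_map (br x) u"
  by (simp add: coad_def dual_map_def vec_eq_iff)

lemma pair_neg: "pair (- a) y = - pair a (y::'k::field^'n)"
  by (simp add: pair_def sum_negf)

lemma coad_pair: "klinear (br x) \<Longrightarrow> pair (coad br x u) y = - pair u (br x y)"
  by (simp add: coad_dual pair_neg pair_dual)

lemma partA:
  fixes r1 r2 :: "'k::field^'n^'n"
  assumes "klinear phi" "klinear vphi"
  shows "(tmap vphi id r1 = tmap id phi r2) \<longleftrightarrow> (sharp r1 \<circ> dual_map vphi = phi \<circ> sharp r2)"
proof -
  have e1: "sharp r1 \<circ> dual_map vphi = (*v) (transpose (matrix vphi ** r1))"
    by (rule ext) (simp only: o_apply sharp_mat dual_map_mat matrix_vector_mul_assoc matrix_transpose_mul)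
  have e2: "phi \<circ> sharp r2 = (*v) (transpose (r2 ** transpose (matrix phi)))"
    by (rule ext) (simp only: o_apply sharp_mat matrix_works[OF assms(1), symmetric] matrix_vector_mul_assoc matrix_transpose_mul transpose_transpose)
  show ?thesis unfolding e1 e2 mv_eq tmap1 tmap2
    by (metis transpose_transpose)
qed

lemma partB:
  assumes la: "lie_algebra br" and lp: "klinear phi" and lv: "klinear vphi"
  shows "(\<forall>x y. vphi (br (phi x) y) = br x (vphi y)) \<longleftrightarrow>
         (\<forall>x u. dual_map vphi (coad br x u) = coad br (phi x) (dual_map vphi u))"
proof -
  have lb: "klinear (br x)" for x using la by (simp add: lie_algebra_def)
  have l1: "dual_map vphi (coad br x u) $ i = - pair u (br x (vphi (axis i 1)))" for x u i
    by (simp add: dual_map_def[of vphi "coad br x u"] coad_pair[OF lb])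
  have l2: "coad br (phi x) (dual_map vphi u) $ i = - pair u (vphi (br (phi x) (axis i 1)))" for x u i
    by (simp add: coad_def pair_dual[OF lv])
  show ?thesis
  proof
    assume H: "\<forall>x y. vphi (br (phi x) y) = br x (vphi y)"
    show "\<forall>x u. dual_map vphi (coad br x u) = coad br (phi x) (dual_map vphi u)"
      by (simp add: vec_eq_iff l1 l2 H)
  next
    assume H: "\<forall>x u. dual_map vphi (coad br x u) = coad br (phi x) (dual_map vphi u)"
    show "\<forall>x y. vphi (br (phi x) y) = br x (vphi y)"
    proof (intro allI)
      fix x y
      have ax: "vphi (br (phi x) (axis i 1)) = br x (vphi (axis i 1))" for i
      proof -
        have "pair (axis j 1) (br x (vphi (axis i 1))) = pair (axis j 1) (vphi (br (phi x) (axis i 1)))" for j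
          using H l1[of x "axis j 1" i] l2[of x "axis j 1" i] by (metis neg_equal_iff_equal)
        then show ?thesis by (simp add: vec_eq_iff pair_axis)
      qed
      have c1: "klinear (vphi \<circ> br (phi x))"
        using Vector_Spaces.linear_compose[OF lb lv] .
      have c2: "klinear (br x \<circ> vphi)"
        using Vector_Spaces.linear_compose[OF lv lb] .
      show "vphi (br (phi x) y) = br x (vphi y)"
        using lin_eq_axes[OF c1 c2, of y] ax by simp
    qed
  qed
qed

theorem proposition7p11:
  fixes br :: "'k::field^'n \<Rightarrow> 'k^'n \<Rightarrow> 'k^'n"
    and r1 r2 :: "'k^'n^'n"
    and phi vphi :: "'k^'n \<Rightarrow> 'k^'n"
  assumes "lie_algebra br"
    and "skew_r_matrix br r1" and "skew_r_matrix br r2"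
    and "lie_hom br phi"
    and "klinear vphi"
  shows "(weak_hom br r2 r1 phi vphi \<longleftrightarrow>
            O_hom br (coad br) (sharp r2) (sharp r1) phi (dual_map vphi))
       \<and> (weak_iso br r2 r1 phi vphi \<longleftrightarrow>
            O_iso br (coad br) (sharp r2) (sharp r1) phi (dual_map vphi))"
proof -
  have lp: "klinear phi" using assms(4) by (simp add: lie_hom_def)
  have h: "weak_hom br r2 r1 phi vphi \<longleftrightarrow>
            O_hom br (coad br) (sharp r2) (sharp r1) phi (dual_map vphi)"
    unfolding weak_hom_def O_hom_def
    using partA[OF lp assms(5), of r1 r2] partB[OF assms(1) lp assms(5)] assms(4,5) dual_lin
    by blast
  moreover have "weak_iso br r2 r1 phi vphi \<longleftrightarrow>
            O_iso br (coad br) (sharp r2) (sharp r1) phi (dual_map vphi)"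
    unfolding weak_iso_def O_iso_def using h bij_dual_iff[OF assms(5)] by blast
  ultimately show ?thesis by blast
qed

end
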